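(* Let $p,q$ be positive integers with $2\le p/q<4$, let $G$ be a connected graph with a fixed orientation, and let $f,g$ be two $(p,q)$-colourings of $G$. Let $T$ be a spanning tree of $G$ rooted at a vertex $u$, and for each vertex $v$ and $h\in\{f,g\}$ let $\mathrm{wt}(v,\varphi_h)=\varphi_h(P_v)$, where $P_v$ is the $(u,v)$-path in $T$ traversed from $u$ to $v$. Let $X=\{v:\mathrm{wt}(v,\varphi_f)\le\mathrm{wt}(v,\varphi_g)\}$ and $\overline{X}=V(G)\setminus X$. If both $D_f[X]$ and $D_f[\overline{X}]$ contain a directed cycle, then $f$ does not reconfigure to $g$.
   Context: A $(p,q)$-colouring of $G$ is a map $f:V(G)\to\{0,\dots,p-1\}$ with $q\le|f(u)-f(v)|\le p-q$ for every edge $uv$. $f$ reconfigures to $g$ if there is a sequence of $(p,q)$-colourings from $f$ to $g$ with consecutive ones differing on at most one vertex. For an arc $e=\overrightarrow{xy}$, $\varphi_h(e)=h(y)-h(x)\bmod p$. For a path $P$ with a chosen direction of traversal, $\varphi_h(P)$ is the sum (in $\mathbb{Z}$) of $\varphi_h(e)$ over edges $e$ of $P$ oriented along the traversal and of $p-\varphi_h(e)$ over edges oriented against it. $D_f$ is the digraph on $V(G)$ with an arc $\overrightarrow{xy}$ whenever $xy\in E(G)$ and $f(y)-f(x)\equiv q\pmod p$. *)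

theory Defs
  imports Main
begin

definition simple_graph :: "'a set \<Rightarrow> ('a \<Rightarrow> 'a \<Rightarrow> bool) \<Rightarrow> bool" where
  "simple_graph V E \<longleftrightarrow> finite V \<and> (\<forall>x y. E x y \<longrightarrow> x \<in> V \<and> y \<in> V \<and> x \<noteq> y \<and> E y x)"

definition is_path :: "('a \<Rightarrow> 'a \<Rightarrow> bool) \<Rightarrow> 'a list \<Rightarrow> bool" where
  "is_path E xs \<longleftrightarrow> xs \<noteq> [] \<and> distinct xs \<and> (\<forall>i. Suc i < length xs \<longrightarrow> E (xs ! i) (xs ! Suc i))"

definition is_uv_path :: "('a \<Rightarrow> 'a \<Rightarrow> bool) \<Rightarrow> 'a \<Rightarrow> 'a \<Rightarrow> 'a list \<Rightarrow> bool" where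
  "is_uv_path E u v xs \<longleftrightarrow> is_path E xs \<and> hd xs = u \<and> last xs = v"

definition connected_graph :: "'a set \<Rightarrow> ('a \<Rightarrow> 'a \<Rightarrow> bool) \<Rightarrow> bool" where
  "connected_graph V E \<longleftrightarrow> V \<noteq> {} \<and> (\<forall>x\<in>V. \<forall>y\<in>V. \<exists>xs. is_uv_path E x y xs)"

definition has_cycle :: "('a \<Rightarrow> 'a \<Rightarrow> bool) \<Rightarrow> bool" where
  "has_cycle E \<longleftrightarrow> (\<exists>xs. is_path E xs \<and> length xs \<ge> 3 \<and> E (last xs) (hd xs))"

definition spanning_tree :: "'a set \<Rightarrow> ('a \<Rightarrow> 'a \<Rightarrow> bool) \<Rightarrow> ('a \<Rightarrow> 'a \<Rightarrow> bool) \<Rightarrow> bool" where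
  "spanning_tree V E T \<longleftrightarrow> (\<forall>x y. T x y \<longrightarrow> E x y \<and> T y x) \<and> connected_graph V T \<and> \<not> has_cycle T"

definition orientation :: "('a \<Rightarrow> 'a \<Rightarrow> bool) \<Rightarrow> ('a \<Rightarrow> 'a \<Rightarrow> bool) \<Rightarrow> bool" where
  "orientation E ori \<longleftrightarrow> (\<forall>x y. ori x y \<longrightarrow> E x y) \<and> (\<forall>x y. E x y \<longrightarrow> (ori x y \<longleftrightarrow> \<not> ori y x))"

definition pq_colouring :: "int \<Rightarrow> int \<Rightarrow> 'a set \<Rightarrow> ('a \<Rightarrow> 'a \<Rightarrow> bool) \<Rightarrow> ('a \<Rightarrow> int) \<Rightarrow> bool" where
  "pq_colouring p q V E f \<longleftrightarrow> (\<forall>v\<in>V. 0 \<le> f v \<and> f v \<le> p - 1) \<and>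
     (\<forall>u v. E u v \<longrightarrow> q \<le> \<bar>f u - f v\<bar> \<and> \<bar>f u - f v\<bar> \<le> p - q)"

definition recol_step :: "int \<Rightarrow> int \<Rightarrow> 'a set \<Rightarrow> ('a \<Rightarrow> 'a \<Rightarrow> bool) \<Rightarrow> ('a \<Rightarrow> int) \<Rightarrow> ('a \<Rightarrow> int) \<Rightarrow> bool" where
  "recol_step p q V E f g \<longleftrightarrow> pq_colouring p q V E f \<and> pq_colouring p q V E g \<and>
     card {v\<in>V. f v \<noteq> g v} \<le> 1"

definition reconfigures :: "int \<Rightarrow> int \<Rightarrow> 'a set \<Rightarrow> ('a \<Rightarrow> 'a \<Rightarrow> bool) \<Rightarrow> ('a \<Rightarrow> int) \<Rightarrow> ('a \<Rightarrow> int) \<Rightarrow> bool" where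
  "reconfigures p q V E f g \<longleftrightarrow> (recol_step p q V E)\<^sup>*\<^sup>* f g"

definition phi_arc :: "int \<Rightarrow> ('a \<Rightarrow> int) \<Rightarrow> 'a \<Rightarrow> 'a \<Rightarrow> int" where
  "phi_arc p h x y = (h y - h x) mod p"

definition phi_step :: "int \<Rightarrow> ('a \<Rightarrow> 'a \<Rightarrow> bool) \<Rightarrow> ('a \<Rightarrow> int) \<Rightarrow> 'a \<Rightarrow> 'a \<Rightarrow> int" where
  "phi_step p ori h a b = (if ori a b then phi_arc p h a b else p - phi_arc p h b a)"

definition phi_path :: "int \<Rightarrow> ('a \<Rightarrow> 'a \<Rightarrow> bool) \<Rightarrow> ('a \<Rightarrow> int) \<Rightarrow> 'a list \<Rightarrow> int" where
  "phi_path p ori h xs = (\<Sum>i<length xs - 1. phi_step p ori h (xs ! i) (xs ! Suc i))"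

definition wt :: "int \<Rightarrow> ('a \<Rightarrow> 'a \<Rightarrow> bool) \<Rightarrow> ('a \<Rightarrow> 'a \<Rightarrow> bool) \<Rightarrow> 'a \<Rightarrow> ('a \<Rightarrow> int) \<Rightarrow> 'a \<Rightarrow> int" where
  "wt p ori T u h v = phi_path p ori h (THE xs. is_uv_path T u v xs)"

definition Df_arc :: "int \<Rightarrow> int \<Rightarrow> ('a \<Rightarrow> 'a \<Rightarrow> bool) \<Rightarrow> ('a \<Rightarrow> int) \<Rightarrow> 'a \<Rightarrow> 'a \<Rightarrow> bool" where
  "Df_arc p q E f x y \<longleftrightarrow> E x y \<and> (f y - f x) mod p = q mod p"

definition has_dicycle_in :: "('a \<Rightarrow> 'a \<Rightarrow> bool) \<Rightarrow> 'a set \<Rightarrow> bool" where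
  "has_dicycle_in D S \<longleftrightarrow> (\<exists>xs. length xs \<ge> 2 \<and> distinct xs \<and> set xs \<subseteq> S \<and>
      (\<forall>i. Suc i < length xs \<longrightarrow> D (xs ! i) (xs ! Suc i)) \<and> D (last xs) (hd xs))"

end

theory Submission
  imports Defs
begin


lemma is_path_alt: "is_path E xs \<longleftrightarrow> xs \<noteq> [] \<and> distinct xs \<and> successively E xs"
  unfolding is_path_def successively_conv_nth by blast

lemma distinct_hd_last: "xs \<noteq> [] \<Longrightarrow> distinct xs \<Longrightarrow> hd xs = last xs \<Longrightarrow> xs = [hd xs]"
proof (cases xs)
  case (Cons a r)
  assume "distinct xs" "hd xs = last xs"
  then show ?thesis using Cons by (cases r rule: rev_cases) auto
qed simp

lemma two_ends: assumes "xs \<noteq> []" "hd xs = u" "last xs = v" "u \<noteq> v"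
  shows "\<exists>m. xs = u # m @ [v]"
proof -
  obtain r where r: "xs = u # r" using assms by (cases xs) auto
  then have "r \<noteq> []" using assms by auto
  then obtain m where "r = m @ [v]" using assms r
    by (metis append_butlast_last_id last_ConsR)
  then show ?thesis using r by auto
qed

lemma path_unique:
  assumes sym: "\<forall>x y. T x y \<longrightarrow> T y x" and nc: "\<not> has_cycle T"
  shows "is_uv_path T u v xs \<Longrightarrow> is_uv_path T u v ys \<Longrightarrow> xs = ys"
proof (induction "length xs + length ys" arbitrary: u v xs ys rule: less_induct)
  case less
  from less.prems have px: "xs \<noteq> []" "distinct xs" "successively T xs" "hd xs = u" "last xs = v"
    and py: "ys \<noteq> []" "distinct ys" "successively T ys" "hd ys = u" "last ys = v"
    by (auto simp: is_uv_path_def is_path_alt)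
  show ?case
  proof (cases "\<exists>w \<in> set xs \<inter> set ys. w \<noteq> u \<and> w \<noteq> v")
    case True
    then obtain w where w: "w \<in> set xs" "w \<in> set ys" "w \<noteq> u" "w \<noteq> v" by blast
    obtain a b where xab: "xs = a @ w # b" using w(1) split_list by metis
    obtain c d where ycd: "ys = c @ w # d" using w(2) split_list by metis
    have a: "a \<noteq> []" using xab px w by auto
    have c: "c \<noteq> []" using ycd py w by auto
    have b: "b \<noteq> []" using xab px w by auto
    have d: "d \<noteq> []" using ycd py w by auto
    have p1: "is_uv_path T u w (a @ [w])" using px xab a
      by (auto simp: is_uv_path_def is_path_alt successively_append_iff)
    have p2: "is_uv_path T u w (c @ [w])" using py ycd c
      by (auto simp: is_uv_path_def is_path_alt successively_append_iff)
    have p3: "is_uv_path T w v (w # b)" using px xab b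
      by (auto simp: is_uv_path_def is_path_alt successively_append_iff)
    have p4: "is_uv_path T w v (w # d)" using py ycd d
      by (auto simp: is_uv_path_def is_path_alt successively_append_iff)
    have "a @ [w] = c @ [w]"
      using less.hyps[OF _ p1 p2] xab ycd b d by auto
    moreover have "w # b = w # d"
      using less.hyps[OF _ p3 p4] xab ycd a c by auto
    ultimately show ?thesis using xab ycd by auto
  next
    case False
    then have disj: "set xs \<inter> set ys \<subseteq> {u, v}" by blast
    show ?thesis
    proof (cases "u = v")
      case True
      then show ?thesis using distinct_hd_last[of xs] distinct_hd_last[of ys] px py by metis
    next
      case uv: False
      obtain k where k: "xs = u # k @ [v]" using two_ends[of xs u v] px uv by auto
      obtain m where m: "ys = u # m @ [v]" using two_ends[of ys u v] py uv by auto
      show ?thesis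
      proof (rule ccontr)
        assume ne: "xs \<noteq> ys"
        show False
        proof (cases "m = []")
          case True
          then have "k \<noteq> []" using ne k m by auto
          then have "is_path T xs \<and> length xs \<ge> 3 \<and> T (last xs) (hd xs)"
            using px py True k m sym by (auto simp: is_path_alt Suc_le_eq)
          then show False using nc unfolding has_cycle_def by blast
        next
          case False
          define zs where "zs = xs @ rev m"
          have "distinct zs" using px py disj k m uv unfolding zs_def by auto
          moreover have "successively T zs"
          proof -
            have z: "zs = (u # k) @ rev (m @ [v])" using k unfolding zs_def by simp
            have s1: "successively T (u # k)" "T (last (u # k)) v"
              using px(3) k by (auto simp: successively_append_iff[of _ "u # k" "[v]", simplified])
            have "successively T (m @ [v])"
              using py(3) m successively_append_iff[of T "[u]" "m @ [v]"] by simp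
            then have s2': "successively (\<lambda>x y. T y x) (m @ [v])"
              using sym by (auto intro: successively_mono)
            have s2: "successively T (rev (m @ [v]))"
              using s2' by (simp only: successively_rev)
            show ?thesis unfolding z using s1 s2
              by (simp only: successively_append_iff) simp
          qed
          moreover have "length zs \<ge> 3" using k False unfolding zs_def by (cases m) auto
          moreover have "T (last zs) (hd zs)"
            using py m False sym k unfolding zs_def
            by (cases m) (auto simp: last_rev)
          ultimately show False using nc unfolding has_cycle_def is_path_alt by fastforce
        qed
      qed
    qed
  qed
qed


lemma arith1: fixes p q A B W W' :: int
  assumes "0<q" "2*q \<le> p" "p<4*q"
    "q \<le> \<bar>A - W\<bar>" "\<bar>A - W\<bar> \<le> p-q" "q \<le> \<bar>W - B\<bar>" "\<bar>W - B\<bar> \<le> p-q"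
    "q \<le> \<bar>A - W'\<bar>" "\<bar>A - W'\<bar> \<le> p-q" "q \<le> \<bar>W' - B\<bar>" "\<bar>W' - B\<bar> \<le> p-q"
  shows "(if A \<le> W then W - A else W - A + p) + (if W \<le> B then B - W else B - W + p)
       = (if A \<le> W' then W' - A else W' - A + p) + (if W' \<le> B then B - W' else B - W' + p)"
  using assms by (auto split: if_splits abs_split)

lemma arith2: fixes p q Y Z W W' :: int
  assumes "0<q" "2*q \<le> p" "p<4*q"
    "q \<le> \<bar>W - Y\<bar>" "\<bar>W - Y\<bar> \<le> p-q" "q \<le> \<bar>W - Z\<bar>" "\<bar>W - Z\<bar> \<le> p-q"
    "q \<le> \<bar>W' - Y\<bar>" "\<bar>W' - Y\<bar> \<le> p-q" "q \<le> \<bar>W' - Z\<bar>" "\<bar>W' - Z\<bar> \<le> p-q"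
  shows "(if W' \<le> Y then Y - W' else Y - W' + p) - (if W \<le> Y then Y - W else Y - W + p)
       = (if W' \<le> Z then Z - W' else Z - W' + p) - (if W \<le> Z then Z - W else Z - W + p)"
  using assms by (auto split: if_splits abs_split)

lemma arith3: fixes p q X Y W W' :: int
  assumes "0<q" "2*q \<le> p" "p<4*q"
    "W - X = q \<or> W - X = q - p" "Y - W = q \<or> Y - W = q - p"
    "0 \<le> W'" "W' \<le> p - 1" "0 \<le> W" "W \<le> p - 1"
    "q \<le> \<bar>W' - X\<bar>" "\<bar>W' - X\<bar> \<le> p-q" "q \<le> \<bar>W' - Y\<bar>" "\<bar>W' - Y\<bar> \<le> p-q"
  shows "W' = W"
  using assms by (auto split: if_splits abs_split)

definition sd :: "int \<Rightarrow> ('a \<Rightarrow> int) \<Rightarrow> 'a \<Rightarrow> 'a \<Rightarrow> int" where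
  "sd p h a b = (if h a \<le> h b then h b - h a else h b - h a + p)"

definition chg :: "int \<Rightarrow> ('a \<Rightarrow> int) \<Rightarrow> ('a \<Rightarrow> int) \<Rightarrow> 'a \<Rightarrow> 'a list \<Rightarrow> int" where
  "chg p h h' w xs = (case xs of a # b # _ \<Rightarrow> if a = w then sd p h' a b - sd p h a b else 0 | _ \<Rightarrow> 0)"

lemma mod_small: fixes d p :: int
  assumes "-p < d" "d < p" shows "d mod p = (if 0 \<le> d then d else d + p)"
proof (cases "0 \<le> d")
  case True then show ?thesis using assms by simp
next
  case False
  have "d mod p = (d + p) mod p" by simp
  also have "\<dots> = d + p" using assms False by (intro mod_pos_pos_trivial) auto
  finally show ?thesis using False by simp
qed

lemma edge_facts:
  assumes "simple_graph V E" "pq_colouring p q V E h" "E a b"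
  shows "a \<in> V" "b \<in> V" "a \<noteq> b" "E b a" "0 \<le> h a" "h a \<le> p - 1" "0 \<le> h b" "h b \<le> p - 1"
    "q \<le> \<bar>h a - h b\<bar>" "\<bar>h a - h b\<bar> \<le> p - q"
  using assms unfolding simple_graph_def pq_colouring_def by blast+

lemma phi_step_edge:
  assumes "simple_graph V E" "pq_colouring p q V E h" "E a b" "0 < q"
  shows "phi_step p ori h a b = sd p h a b"
proof -
  note ef = edge_facts[OF assms(1-3)]
  have m1: "(h b - h a) mod p = (if 0 \<le> h b - h a then h b - h a else h b - h a + p)"
    using ef by (intro mod_small) auto
  have m2: "(h a - h b) mod p = (if 0 \<le> h a - h b then h a - h b else h a - h b + p)"
    using ef by (intro mod_small) auto
  show ?thesis unfolding phi_step_def phi_arc_def sd_def m1 m2 using ef assms(4) by auto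
qed

lemma phi_path_Cons2: "phi_path p ori h (a # b # r) = phi_step p ori h a b + phi_path p ori h (b # r)"
  unfolding phi_path_def by (simp add: sum.lessThan_Suc_shift del: sum.lessThan_Suc)

lemma phi_path_single: "phi_path p ori h [a] = 0"
  unfolding phi_path_def by simp

lemma phi_path_cong: "\<forall>x\<in>set xs. h' x = h x \<Longrightarrow> phi_path p ori h' xs = phi_path p ori h xs"
proof (induction xs rule: induct_list012)
  case 1 then show ?case by (simp add: phi_path_def)
next
  case (2 x) then show ?case by (simp add: phi_path_single)
next
  case (3 x y zs)
  then show ?case by (simp add: phi_path_Cons2 phi_step_def phi_arc_def)
qed

lemma change:
  assumes sg: "simple_graph V E" and q: "0<q" "2*q \<le> p" "p<4*q"
    and hc: "pq_colouring p q V E h" and hc': "pq_colouring p q V E h'"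
    and agree: "\<forall>v\<in>V. v \<noteq> w \<longrightarrow> h' v = h v"
  shows "successively E xs \<Longrightarrow> distinct xs \<Longrightarrow> xs \<noteq> [] \<Longrightarrow> last xs \<noteq> w \<Longrightarrow>
    phi_path p ori h' xs = phi_path p ori h xs + chg p h h' w xs"
proof (induction xs rule: induct_list012)
  case 1 then show ?case by simp
next
  case (2 x) then show ?case by (simp add: phi_path_single chg_def)
next
  case (3 x y zs)
  have exy: "E x y" using "3.prems" by simp
  have IH: "phi_path p ori h' (y # zs) = phi_path p ori h (y # zs) + chg p h h' w (y # zs)"
    using "3.prems" by (intro "3.IH"(2)) auto
  have st: "phi_step p ori h' x y = sd p h' x y" "phi_step p ori h x y = sd p h x y"
    using phi_step_edge[OF sg hc' exy q(1)] phi_step_edge[OF sg hc exy q(1)] by auto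
  note ef = edge_facts[OF sg hc exy] edge_facts[OF sg hc' exy]
  show ?case
  proof (cases "x = w")
    case True
    then have "y \<noteq> w" using "3.prems" by auto
    then have "chg p h h' w (y # zs) = 0" unfolding chg_def by (auto split: list.splits)
    then show ?thesis using IH st True by (simp add: phi_path_Cons2 chg_def)
  next
    case xw: False
    then have hx: "h' x = h x" using agree ef by auto
    show ?thesis
    proof (cases "y = w")
      case True
      then obtain c zs' where zs: "zs = c # zs'" using "3.prems" by (cases zs) auto
      have eyc: "E y c" using "3.prems" zs by simp
      note eg = edge_facts[OF sg hc eyc] edge_facts[OF sg hc' eyc]
      have "c \<noteq> w" using "3.prems" zs True by auto
      then have hcc: "h' c = h c" using agree eg by auto
      have "sd p h' x w + sd p h' w c = sd p h x w + sd p h w c"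
        unfolding sd_def hx hcc
        using arith1[of q p "h x" "h w" "h c" "h' w"] ef eg q True hx hcc by auto
      then show ?thesis using IH st True xw zs by (simp add: phi_path_Cons2 chg_def)
    next
      case False
      then have hy: "h' y = h y" using agree ef by auto
      have "chg p h h' w (y # zs) = 0" using False unfolding chg_def by (auto split: list.splits)
      then show ?thesis using IH st xw hx hy by (simp add: phi_path_Cons2 chg_def sd_def)
    qed
  qed
qed


lemma cycle_nbrs:
  assumes "length cs \<ge> 2" "successively D cs" "D (last cs) (hd cs)" "w \<in> set cs"
  shows "\<exists>x\<in>set cs. D x w" "\<exists>y\<in>set cs. D w y"
proof -
  obtain a b where ab: "cs = a @ w # b" using assms(4) split_list by metis
  show "\<exists>x\<in>set cs. D x w"
  proof (cases "a = []")
    case True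
    then have "hd cs = w" using ab by simp
    moreover have "last cs \<in> set cs" using assms(1) by (intro last_in_set) auto
    ultimately show ?thesis using assms(3) by metis
  next
    case False
    then have "D (last a) w" using assms(2) ab by (auto simp: successively_append_iff)
    moreover have "last a \<in> set cs" using False ab by auto
    ultimately show ?thesis by blast
  qed
  show "\<exists>y\<in>set cs. D w y"
  proof (cases b)
    case Nil
    then have "last cs = w" using ab by simp
    moreover have "hd cs \<in> set cs" using assms(1) by (intro hd_in_set) auto
    ultimately show ?thesis using assms(3) by metis
  next
    case (Cons c b')
    then have "D w c" using assms(2) ab by (auto simp: successively_append_iff)
    then show ?thesis using ab Cons by auto
  qed
qed

lemma frozen:
  assumes sg: "simple_graph V E" and q: "0<q" "2*q \<le> p" "p<4*q"
    and fc: "pq_colouring p q V E f"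
    and hc: "pq_colouring p q V E h" and hc': "pq_colouring p q V E h'"
    and agree: "\<forall>v\<in>V. v \<noteq> w \<longrightarrow> h' v = h v"
    and cyc: "length cs \<ge> 2" "successively (Df_arc p q E f) cs" "Df_arc p q E f (last cs) (hd cs)"
    and hf: "\<forall>v\<in>set cs. h v = f v" and w: "w \<in> set cs"
  shows "h' w = h w"
proof -
  obtain x where x: "x \<in> set cs" "Df_arc p q E f x w" using cycle_nbrs(1)[OF cyc w] by blast
  obtain y where y: "y \<in> set cs" "Df_arc p q E f w y" using cycle_nbrs(2)[OF cyc w] by blast
  have exw: "E x w" and ewy: "E w y" using x y by (auto simp: Df_arc_def)
  note e1 = edge_facts[OF sg fc exw] edge_facts[OF sg fc ewy]
  note e2 = edge_facts[OF sg hc' exw] edge_facts[OF sg hc' ewy]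
  have qq: "q mod p = q" using q by simp
  have m1: "(f w - f x) mod p = (if 0 \<le> f w - f x then f w - f x else f w - f x + p)"
    using e1 by (intro mod_small) auto
  have m2: "(f y - f w) mod p = (if 0 \<le> f y - f w then f y - f w else f y - f w + p)"
    using e1 by (intro mod_small) auto
  have d1: "f w - f x = q \<or> f w - f x = q - p" using x m1 qq by (auto simp: Df_arc_def split: if_splits)
  have d2: "f y - f w = q \<or> f y - f w = q - p" using y m2 qq by (auto simp: Df_arc_def split: if_splits)
  have hx: "h' x = f x" using agree e1 hf x by auto
  have hy: "h' y = f y" using agree e1 hf y by auto
  have "h' w = f w"
    using arith3[of q p "f w" "f x" "f y" "h' w"] q d1 d2 e1 e2 hx hy by auto
  then show ?thesis using hf w by simp
qed


lemma succ_in_V: "simple_graph V E \<Longrightarrow> successively E xs \<Longrightarrow> xs \<noteq> [] \<Longrightarrow> hd xs \<in> V \<Longrightarrow> set xs \<subseteq> V"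
  by (induction xs rule: induct_list012) (auto simp: simple_graph_def)

lemma chg_hd: "hd xs \<noteq> w \<Longrightarrow> chg p h h' w xs = 0"
  by (auto simp: chg_def split: list.splits)

theorem lemma2p9:
  fixes p q :: int and V :: "'a set" and E ori T :: "'a \<Rightarrow> 'a \<Rightarrow> bool"
    and f g :: "'a \<Rightarrow> int" and u :: 'a
  assumes "0 < q" and "2 * q \<le> p" and "p < 4 * q"
    and "simple_graph V E" and "connected_graph V E"
    and "orientation E ori"
    and "pq_colouring p q V E f" and "pq_colouring p q V E g"
    and "spanning_tree V E T" and "u \<in> V"
    and "X = {v\<in>V. wt p ori T u f v \<le> wt p ori T u g v}"
    and "has_dicycle_in (Df_arc p q E f) X"
    and "has_dicycle_in (Df_arc p q E f) (V - X)"
  shows "\<not> reconfigures p q V E f g"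
proof
  assume rec: "reconfigures p q V E f g"
  note q = assms(1-3)
  note sg = assms(4)
  note fc = assms(7)
  have finV: "finite V" using sg by (simp add: simple_graph_def)
  have TE: "\<forall>x y. T x y \<longrightarrow> E x y \<and> T y x" and Tcon: "connected_graph V T" and Tnc: "\<not> has_cycle T"
    using assms(9) by (auto simp: spanning_tree_def)
  have Tsym: "\<forall>x y. T x y \<longrightarrow> T y x" using TE by blast
  define L where "L v = (THE xs. is_uv_path T u v xs)" for v
  have Lp: "is_uv_path T u v (L v)" if vV: "v \<in> V" for v
  proof -
    have "\<forall>x\<in>V. \<forall>y\<in>V. \<exists>xs. is_uv_path T x y xs" using Tcon unfolding connected_graph_def by (rule conjunct2)
    then obtain xs where xs: "is_uv_path T u v xs" using assms(10) vV by blast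
    have "\<exists>!xs. is_uv_path T u v xs"
    proof (rule ex1I)
      show "is_uv_path T u v xs" by (rule xs)
    next
      fix ys assume "is_uv_path T u v ys"
      then show "ys = xs" using xs by (rule path_unique[OF Tsym Tnc])
    qed
    then show ?thesis unfolding L_def by (rule theI')
  qed
  have LE: "successively E (L v)" "distinct (L v)" "L v \<noteq> []" "hd (L v) = u" "last (L v) = v"
    if "v \<in> V" for v
  proof -
    have "L v \<noteq> [] \<and> distinct (L v) \<and> successively T (L v) \<and> hd (L v) = u \<and> last (L v) = v"
      using Lp[OF that] unfolding is_uv_path_def is_path_alt by blast
    moreover have "successively E (L v)"
    proof (rule successively_mono[of T "L v" E])
      show "successively T (L v)" using calculation by blast
    next
      fix x y assume "T x y" then show "E x y" using TE by blast
    qed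
    ultimately show "successively E (L v)" "distinct (L v)" "L v \<noteq> []" "hd (L v) = u" "last (L v) = v"
      by blast+
  qed
  have LV: "set (L v) \<subseteq> V" if "v \<in> V" for v
    using succ_in_V[OF sg LE(1)[OF that] LE(3)[OF that]] LE(4)[OF that] assms(10) by simp
  have wtL: "wt p ori T u h v = phi_path p ori h (L v)" for h v unfolding wt_def L_def by simp
  obtain C1 where C1: "length C1 \<ge> 2" "distinct C1" "set C1 \<subseteq> X"
    "successively (Df_arc p q E f) C1" "Df_arc p q E f (last C1) (hd C1)"
    using assms(12) unfolding has_dicycle_in_def successively_conv_nth by blast
  obtain C2 where C2: "length C2 \<ge> 2" "distinct C2" "set C2 \<subseteq> V - X"
    "successively (Df_arc p q E f) C2" "Df_arc p q E f (last C2) (hd C2)"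
    using assms(13) unfolding has_dicycle_in_def successively_conv_nth by blast
  define F where "F = set C1 \<union> set C2"
  have FV: "F \<subseteq> V" using C1 C2 assms(11) unfolding F_def by auto
  define Inv where "Inv h \<longleftrightarrow> (\<forall>v\<in>F. h v = f v) \<and>
      (\<exists>\<Delta>. \<forall>v\<in>F. phi_path p ori h (L v) = phi_path p ori f (L v) + \<Delta>)" for h
  have "Inv g" using rec unfolding reconfigures_def
  proof (induction rule: rtranclp_induct)
    case base
    then show ?case unfolding Inv_def by (auto intro: exI[of _ 0])
  next
    case (step h h')
    have hc: "pq_colouring p q V E h" and hc': "pq_colouring p q V E h'"
      and cd: "card {v\<in>V. h v \<noteq> h' v} \<le> 1" using step.hyps(2) unfolding recol_step_def by blast+
    have hf: "\<forall>v\<in>F. h v = f v" and hD: "\<exists>\<Delta>. \<forall>v\<in>F. phi_path p ori h (L v) = phi_path p ori f (L v) + \<Delta>"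
      using step.IH unfolding Inv_def by auto
    obtain w where agree: "\<forall>v\<in>V. v \<noteq> w \<longrightarrow> h' v = h v"
    proof (cases "{v\<in>V. h v \<noteq> h' v} = {}")
      case True
      have "\<forall>v\<in>V. v \<noteq> u \<longrightarrow> h' v = h v" using True by auto
      then show ?thesis by (rule that)
    next
      case False
      then obtain w where w: "w \<in> V" "h w \<noteq> h' w" by auto
      have fin: "finite {v\<in>V. h v \<noteq> h' v}" using finV by simp
      have "card {v\<in>V. h v \<noteq> h' v} \<le> Suc 0" using cd by simp
      then have "\<forall>a\<in>{v\<in>V. h v \<noteq> h' v}. \<forall>b\<in>{v\<in>V. h v \<noteq> h' v}. a = b"
        using card_le_Suc0_iff_eq[OF fin] by blast
      then have one: "\<And>a b. a \<in> {v\<in>V. h v \<noteq> h' v} \<Longrightarrow> b \<in> {v\<in>V. h v \<noteq> h' v} \<Longrightarrow> a = b"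
        by blast
      have "\<forall>v\<in>V. v \<noteq> w \<longrightarrow> h' v = h v"
      proof (intro ballI impI)
        fix v assume v: "v \<in> V" "v \<noteq> w"
        show "h' v = h v"
        proof (rule ccontr)
          assume "h' v \<noteq> h v"
          then have "v \<in> {v\<in>V. h v \<noteq> h' v}" using v by simp
          moreover have "w \<in> {v\<in>V. h v \<noteq> h' v}" using w by simp
          ultimately have "v = w" by (rule one)
          then show False using v by simp
        qed
      qed
      then show ?thesis by (rule that)
    qed
    have h'f: "\<forall>v\<in>F. h' v = f v"
    proof
      fix v assume vF: "v \<in> F"
      show "h' v = f v"
      proof (cases "v = w")
        case False then show ?thesis using agree hf vF FV by auto
      next
        case True
        have "h' w = h w"
        proof (cases "w \<in> set C1")
          case True
          then show ?thesis using frozen[OF sg q fc hc hc' agree C1(1) C1(4) C1(5)] hf True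
            unfolding F_def by auto
        next
          case False
          then have "w \<in> set C2" using vF True unfolding F_def by auto
          then show ?thesis using frozen[OF sg q fc hc hc' agree C2(1) C2(4) C2(5)] hf
            unfolding F_def by auto
        qed
        then show ?thesis using True hf vF by auto
      qed
    qed
    have "\<exists>\<delta>. \<forall>v\<in>F. phi_path p ori h' (L v) = phi_path p ori h (L v) + \<delta>"
    proof (cases "\<forall>v\<in>V. h' v = h v")
      case True
      have "phi_path p ori h' (L v) = phi_path p ori h (L v)" if "v \<in> F" for v
        using True LV[of v] that FV by (intro phi_path_cong) auto
      then show ?thesis by (intro exI[of _ 0]) auto
    next
      case False
      then obtain w0 where "w0 \<in> V" "h' w0 \<noteq> h w0" by auto
      then have wV: "w \<in> V" and hw: "h' w \<noteq> h w" using agree by metis+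
      have wF: "w \<notin> F" using hw h'f hf by auto
      have ch: "phi_path p ori h' (L v) = phi_path p ori h (L v) + chg p h h' w (L v)"
        if "v \<in> F" for v
      proof -
        have vV: "v \<in> V" using that FV by auto
        have "last (L v) \<noteq> w" using LE(5)[OF vV] that wF by auto
        then show ?thesis using change[OF sg q hc hc' agree] LE[OF vV] by blast
      qed
      show ?thesis
      proof (cases "u = w")
        case False
        have "chg p h h' w (L v) = 0" if "v \<in> F" for v
        proof -
          have "v \<in> V" using that FV by blast
          then have "hd (L v) \<noteq> w" using LE(4) False by simp
          then show ?thesis by (rule chg_hd)
        qed
        then show ?thesis using ch by (intro exI[of _ 0]) auto
      next
        case True
        have nb: "\<exists>y r. L v = u # y # r \<and> E u y \<and> y \<noteq> u" if "v \<in> F" for v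
        proof -
          have vV: "v \<in> V" and vu: "v \<noteq> u" using that FV wF True by auto
          obtain m where m: "L v = u # m @ [v]" using two_ends[of "L v" u v] LE[OF vV] vu by auto
          obtain y r where "m @ [v] = y # r" by (cases "m @ [v]") auto
          moreover have "y \<noteq> u" using LE(2)[OF vV] m calculation by auto
          ultimately show ?thesis using LE(1)[OF vV] m by auto
        qed
        have same: "chg p h h' w (L v1) = chg p h h' w (L v2)" if v1F: "v1 \<in> F" and v2F: "v2 \<in> F" for v1 v2
        proof -
          obtain y1 r1 where y1: "L v1 = u # y1 # r1" "E u y1" "y1 \<noteq> u" using nb[OF v1F] by blast
          obtain y2 r2 where y2: "L v2 = u # y2 # r2" "E u y2" "y2 \<noteq> u" using nb[OF v2F] by blast
          note e = edge_facts[OF sg hc y1(2)] edge_facts[OF sg hc y2(2)]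
            edge_facts[OF sg hc' y1(2)] edge_facts[OF sg hc' y2(2)]
          have yV: "y1 \<in> V" "y2 \<in> V" using edge_facts(2)[OF sg hc y1(2)] edge_facts(2)[OF sg hc y2(2)] by blast+
          have a1: "h' y1 = h y1" "h' y2 = h y2" using agree yV True y1(3) y2(3) by auto
          have b1: "q \<le> \<bar>h u - h y1\<bar>" "\<bar>h u - h y1\<bar> \<le> p - q"
            "q \<le> \<bar>h u - h y2\<bar>" "\<bar>h u - h y2\<bar> \<le> p - q"
            using edge_facts(9,10)[OF sg hc y1(2)] edge_facts(9,10)[OF sg hc y2(2)] by blast+
          have b2: "q \<le> \<bar>h' u - h y1\<bar>" "\<bar>h' u - h y1\<bar> \<le> p - q"
            "q \<le> \<bar>h' u - h y2\<bar>" "\<bar>h' u - h y2\<bar> \<le> p - q"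
            using edge_facts(9,10)[OF sg hc' y1(2)] edge_facts(9,10)[OF sg hc' y2(2)] a1 by simp_all
          have "sd p h' u y1 - sd p h u y1 = sd p h' u y2 - sd p h u y2"
            unfolding sd_def a1 by (rule arith2[OF q b1 b2])
          then show ?thesis unfolding chg_def y1(1) y2(1) using True by simp
        qed
        show ?thesis
        proof (cases "F = {}")
          case True then show ?thesis by auto
        next
          case False
          then obtain v0 where "v0 \<in> F" by auto
          then have "\<forall>v\<in>F. phi_path p ori h' (L v) = phi_path p ori h (L v) + chg p h h' w (L v0)"
          proof (intro ballI)
            fix v assume "v0 \<in> F" "v \<in> F"
            then have "chg p h h' w (L v) = chg p h h' w (L v0)" by (rule same[rotated])
            then show "phi_path p ori h' (L v) = phi_path p ori h (L v) + chg p h h' w (L v0)"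
              using ch[OF \<open>v \<in> F\<close>] by simp
          qed
          then show ?thesis by blast
        qed
      qed
    qed
    then obtain \<delta> where dl: "\<forall>v\<in>F. phi_path p ori h' (L v) = phi_path p ori h (L v) + \<delta>" by blast
    obtain \<Delta> where DD: "\<forall>v\<in>F. phi_path p ori h (L v) = phi_path p ori f (L v) + \<Delta>" using hD by blast
    have "\<forall>v\<in>F. phi_path p ori h' (L v) = phi_path p ori f (L v) + (\<Delta> + \<delta>)"
      using dl DD by simp
    then show ?case using h'f unfolding Inv_def by blast
  qed
  then obtain \<Delta> where D: "\<forall>v\<in>F. phi_path p ori g (L v) = phi_path p ori f (L v) + \<Delta>"
    unfolding Inv_def by blast
  have v1: "hd C1 \<in> set C1" and v2: "hd C2 \<in> set C2" using C1(1) C2(1) by (auto intro: hd_in_set)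
  have "hd C1 \<in> X" "hd C2 \<in> V - X" using v1 v2 C1(3) C2(3) by blast+
  then have "wt p ori T u f (hd C1) \<le> wt p ori T u g (hd C1)"
     "\<not> wt p ori T u f (hd C2) \<le> wt p ori T u g (hd C2)" using assms(11) by blast+
  then have i1: "phi_path p ori f (L (hd C1)) \<le> phi_path p ori g (L (hd C1))"
    and i2: "\<not> phi_path p ori f (L (hd C2)) \<le> phi_path p ori g (L (hd C2))"
    unfolding wtL by blast+
  have "hd C1 \<in> F" "hd C2 \<in> F" using v1 v2 unfolding F_def by blast+
  then have "phi_path p ori g (L (hd C1)) = phi_path p ori f (L (hd C1)) + \<Delta>"
    "phi_path p ori g (L (hd C2)) = phi_path p ori f (L (hd C2)) + \<Delta>" using D by blast+
  then show False using i1 i2 by linarith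
qed

end
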